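(* Let $N=\{1,\dots,n\}$, $n\ge2$, be a parallel-link network with unit demand and affine latencies $\ell_i(x_i)=a_ix_i+b_i$, $a_i>0$, $b_i\ge 0$, with $x_i(0)>0$ for all $i\in N$. Then for every $c\in\mathbb{R}_+$ there is at most one pair $(t,x)$ satisfying: there is $K$ with $a_ix_i+b_i+t_i=K$ for all $i$, $\sum_ix_i=1$, $t_i=\min\{(a_i+1/\sum_{j\ne i}1/a_j)x_i,\,c\}$ for all $i$, and $x_i>0$ for all $i$. Consequently the $c$-capped subgame perfect Nash equilibrium is unique, i.e. $|\mathcal{T}(c)|=1$.
   Context: Parallel links $N$, one unit of flow; flows $x\in\mathbb{R}^N_+$ with $\sum_ix_i=1$. For tolls $t\in\mathbb{R}^N_+$, $x(t)$ is the unique Wardrop equilibrium for $t$ (for all $i,j$ with $x_i>0$: $\ell_i(x_i)+t_i\le\ell_j(x_j)+t_j$); $x(0)$ is the untolled one. Profit $\Pi_i(t)=t_ix_i(t)$. $\mathcal{T}(c)$: toll vectors $t$ with $0\le t_i\le c$ for all $i$ such that for every $i$ and $t'_i\in[0,c]$, $\Pi_i(t_i,t_{-i})\ge \Pi_i(t'_i,t_{-i})$ (flow recomputed). *)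

theory Defs
  imports Complex_Main
begin

text \<open>Links are indexed by 0..<n. Latency of link i is a i * x + b i.
  Flows and tolls are functions nat => real; entries outside 0..<n are fixed to 0.\<close>

definition wardrop :: "nat \<Rightarrow> (nat \<Rightarrow> real) \<Rightarrow> (nat \<Rightarrow> real) \<Rightarrow> (nat \<Rightarrow> real) \<Rightarrow> (nat \<Rightarrow> real) \<Rightarrow> bool" where
  "wardrop n a b t x \<longleftrightarrow>
     (\<forall>i<n. 0 \<le> x i) \<and> (\<Sum>i<n. x i) = 1 \<and> (\<forall>i\<ge>n. x i = 0) \<and>
     (\<forall>i<n. \<forall>j<n. 0 < x i \<longrightarrow> a i * x i + b i + t i \<le> a j * x j + b j + t j)"

definition weq :: "nat \<Rightarrow> (nat \<Rightarrow> real) \<Rightarrow> (nat \<Rightarrow> real) \<Rightarrow> (nat \<Rightarrow> real) \<Rightarrow> (nat \<Rightarrow> real)" where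
  "weq n a b t = (THE x. wardrop n a b t x)"

definition profit :: "nat \<Rightarrow> (nat \<Rightarrow> real) \<Rightarrow> (nat \<Rightarrow> real) \<Rightarrow> (nat \<Rightarrow> real) \<Rightarrow> nat \<Rightarrow> real" where
  "profit n a b t i = t i * weq n a b t i"

definition capped_eq :: "nat \<Rightarrow> (nat \<Rightarrow> real) \<Rightarrow> (nat \<Rightarrow> real) \<Rightarrow> real \<Rightarrow> (nat \<Rightarrow> real) set" where
  "capped_eq n a b c = {t. (\<forall>i<n. 0 \<le> t i \<and> t i \<le> c) \<and> (\<forall>i\<ge>n. t i = 0) \<and>
     (\<forall>i<n. \<forall>t'. 0 \<le> t' \<and> t' \<le> c \<longrightarrow> profit n a b (t(i := t')) i \<le> profit n a b t i)}"

definition candidate :: "nat \<Rightarrow> (nat \<Rightarrow> real) \<Rightarrow> (nat \<Rightarrow> real) \<Rightarrow> real \<Rightarrow> (nat \<Rightarrow> real) \<Rightarrow> (nat \<Rightarrow> real) \<Rightarrow> bool" where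
  "candidate n a b c t x \<longleftrightarrow>
     (\<exists>K. \<forall>i<n. a i * x i + b i + t i = K) \<and> (\<Sum>i<n. x i) = 1 \<and>
     (\<forall>i<n. t i = min ((a i + 1 / (\<Sum>j\<in>{..<n} - {i}. 1 / a j)) * x i) c) \<and>
     (\<forall>i<n. 0 < x i)"

end

theory Submission
  imports Defs
begin

locale net =
  fixes n :: nat and a b :: "nat \<Rightarrow> real"
  assumes n2: "n \<ge> 2" and apos: "\<forall>i<n. 0 < a i" and bnn: "\<forall>i<n. 0 \<le> b i"
    and x0pos: "\<forall>i<n. 0 < weq n a b (\<lambda>_. 0) i"
begin

definition S where "S i = (\<Sum>j\<in>{..<n}-{i}. 1/a j)"
definition al where "al i = a i + 1 / S i"

lemma S_pos: assumes "i<n" shows "0 < S i"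
proof -
  obtain j where j: "j<n" "j\<noteq>i" using n2 by (metis One_nat_def Suc_1 Suc_le_lessD le_less_trans less_Suc_eq not_less_eq_eq zero_less_Suc)
  show ?thesis unfolding S_def
    by (rule sum_pos) (use j apos in auto)
qed

lemma al_gt: "i<n \<Longrightarrow> a i < al i" unfolding al_def using S_pos by simp
lemma al_pos: "i<n \<Longrightarrow> 0 < al i" using al_gt apos by (meson less_trans)

lemma wardrop_unique:
  assumes x: "wardrop n a b t x" and y: "wardrop n a b t y" shows "x = y"
proof -
  define cx where "cx j = a j * x j + b j + t j" for j
  define cy where "cy j = a j * y j + b j + t j" for j
  have sx: "(\<Sum>i<n. x i) = 1" and sy: "(\<Sum>i<n. y i) = 1" using x y unfolding wardrop_def by auto
  have h1: "0 \<le> (\<Sum>i<n. \<Sum>j<n. x i * y j * (cx j - cx i))"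
  proof (intro sum_nonneg)
    fix i j assume i: "i \<in> {..<n}" and j: "j \<in> {..<n}"
    show "0 \<le> x i * y j * (cx j - cx i)"
    proof (cases "0 < x i")
      case True
      then have "cx i \<le> cx j" using x i j unfolding wardrop_def cx_def by auto
      moreover have "0 \<le> y j" using y j unfolding wardrop_def by auto
      ultimately show ?thesis using True by simp
    next
      case False
      then have "x i = 0" using x i unfolding wardrop_def by (simp add: not_less order_antisym)
      then show ?thesis by simp
    qed
  qed
  have e1: "(\<Sum>i<n. \<Sum>j<n. x i * y j * (cx j - cx i)) = (\<Sum>j<n. y j * cx j) - (\<Sum>i<n. x i * cx i)"
  proof -
    have "(\<Sum>i<n. \<Sum>j<n. x i * y j * (cx j - cx i)) = (\<Sum>i<n. x i * (\<Sum>j<n. y j * cx j) - x i * cx i * (\<Sum>j<n. y j))"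
    proof (rule sum.cong[OF refl])
      fix i show "(\<Sum>j<n. x i * y j * (cx j - cx i)) = x i * (\<Sum>j<n. y j * cx j) - x i * cx i * (\<Sum>j<n. y j)"
        by (simp add: sum_distrib_left sum_subtractf[symmetric] right_diff_distrib mult_ac)
    qed
    also have "\<dots> = (\<Sum>j<n. y j * cx j) - (\<Sum>i<n. x i * cx i)"
      using sx sy by (simp add: sum_subtractf sum_distrib_right[symmetric])
    finally show ?thesis .
  qed
  have h2: "0 \<le> (\<Sum>i<n. \<Sum>j<n. y i * x j * (cy j - cy i))"
  proof (intro sum_nonneg)
    fix i j assume i: "i \<in> {..<n}" and j: "j \<in> {..<n}"
    show "0 \<le> y i * x j * (cy j - cy i)"
    proof (cases "0 < y i")
      case True
      then have "cy i \<le> cy j" using y i j unfolding wardrop_def cy_def by auto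
      moreover have "0 \<le> x j" using x j unfolding wardrop_def by auto
      ultimately show ?thesis using True by simp
    next
      case False
      then have "y i = 0" using y i unfolding wardrop_def by (simp add: not_less order_antisym)
      then show ?thesis by simp
    qed
  qed
  have e2: "(\<Sum>i<n. \<Sum>j<n. y i * x j * (cy j - cy i)) = (\<Sum>j<n. x j * cy j) - (\<Sum>i<n. y i * cy i)"
  proof -
    have "(\<Sum>i<n. \<Sum>j<n. y i * x j * (cy j - cy i)) = (\<Sum>i<n. y i * (\<Sum>j<n. x j * cy j) - y i * cy i * (\<Sum>j<n. x j))"
    proof (rule sum.cong[OF refl])
      fix i show "(\<Sum>j<n. y i * x j * (cy j - cy i)) = y i * (\<Sum>j<n. x j * cy j) - y i * cy i * (\<Sum>j<n. x j)"
        by (simp add: sum_distrib_left sum_subtractf[symmetric] right_diff_distrib mult_ac)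
    qed
    also have "\<dots> = (\<Sum>j<n. x j * cy j) - (\<Sum>i<n. y i * cy i)"
      using sx sy by (simp add: sum_subtractf sum_distrib_right[symmetric])
    finally show ?thesis .
  qed
  have "(\<Sum>j<n. y j * cx j) - (\<Sum>i<n. x i * cx i) + ((\<Sum>j<n. x j * cy j) - (\<Sum>i<n. y i * cy i))
     = - (\<Sum>j<n. a j * (x j - y j)^2)"
  proof -
    have "(\<Sum>j<n. y j * cx j) - (\<Sum>i<n. x i * cx i) + ((\<Sum>j<n. x j * cy j) - (\<Sum>i<n. y i * cy i))
       = (\<Sum>j<n. y j * cx j - x j * cx j + (x j * cy j - y j * cy j))" by (simp only: sum.distrib sum_subtractf)
    also have "\<dots> = (\<Sum>j<n. - (a j * (x j - y j)^2))"
      by (rule sum.cong) (auto simp: cx_def cy_def power2_eq_square algebra_simps)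
    also have "\<dots> = - (\<Sum>j<n. a j * (x j - y j)^2)" by (simp only: sum_negf)
    finally show ?thesis .
  qed
  with h1 h2 e1 e2 have le: "(\<Sum>j<n. a j * (x j - y j)^2) \<le> 0" by linarith
  have nn: "\<And>j. j \<in> {..<n} \<Longrightarrow> 0 \<le> a j * (x j - y j)^2" using apos by (simp add: less_imp_le)
  have "(\<Sum>j<n. a j * (x j - y j)^2) = 0" using le sum_nonneg[of "{..<n}" "\<lambda>j. a j * (x j - y j)^2", OF nn] by linarith
  then have "\<forall>j\<in>{..<n}. a j * (x j - y j)^2 = 0"
    using sum_nonneg_eq_0_iff[of "{..<n}" "\<lambda>j. a j * (x j - y j)^2"] nn by blast
  then have "\<forall>j<n. x j = y j" using apos by (fastforce simp: less_imp_neq[symmetric])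
  moreover have "\<forall>j\<ge>n. x j = y j" using x y unfolding wardrop_def by auto
  ultimately show ?thesis by (metis le_less_linear ext)
qed


lemma wardrop_exists:
  assumes s: "\<forall>j<n. 0 \<le> s j" shows "\<exists>x. wardrop n a b s x"
proof -
  define g where "g K = (\<Sum>j<n. max 0 ((K - b j - s j) / a j))" for K
  have n0: "0 < n" using n2 by simp
  define Kh where "Kh = a 0 + b 0 + s 0"
  have Kh0: "0 \<le> Kh" using apos bnn s n0 unfolding Kh_def by (simp add: add_nonneg_nonneg less_imp_le)
  have g0: "g 0 = 0" unfolding g_def
  proof (rule sum.neutral, intro ballI)
    fix j assume "j \<in> {..<n}"
    then have "0 \<le> b j + s j" "0 < a j" using bnn s apos by auto
    then have "(0 - b j - s j) / a j \<le> 0" by (simp add: divide_nonpos_pos)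
    then show "max 0 ((0 - b j - s j) / a j) = 0" by simp
  qed
  have gh: "1 \<le> g Kh"
  proof -
    have "a 0 \<noteq> 0" using apos n0 by (metis less_irrefl)
    then have "max 0 ((Kh - b 0 - s 0) / a 0) = 1" unfolding Kh_def by simp
    moreover have "max 0 ((Kh - b 0 - s 0) / a 0) \<le> g Kh" unfolding g_def
      by (rule member_le_sum[where f="\<lambda>j. max 0 ((Kh - b j - s j) / a j)"]) (use n0 in auto)
    ultimately show ?thesis by simp
  qed
  have cont: "continuous_on {0..Kh} g" unfolding g_def
    by (intro continuous_intros) (use apos in auto)
  obtain K where K: "0 \<le> K" "K \<le> Kh" "g K = 1"
    using IVT'[of g 0 1 Kh] g0 gh Kh0 cont by auto
  define x where "x j = (if j < n then max 0 ((K - b j - s j) / a j) else 0)" for j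
  have "wardrop n a b s x" unfolding wardrop_def
  proof (intro conjI allI impI)
    show "0 \<le> x i" for i unfolding x_def by simp
    show "(\<Sum>i<n. x i) = 1" using K(3) unfolding g_def x_def by simp
    show "x i = 0" if "n \<le> i" for i using that unfolding x_def by simp
    fix i j assume i: "i < n" and j: "j < n" and xi: "0 < x i"
    have ai: "0 < a i" and aj: "0 < a j" using apos i j by auto
    have "x i = (K - b i - s i) / a i" using xi i unfolding x_def by (auto simp: max_def split: if_splits)
    then have "a i * x i + b i + s i = K" using ai by simp
    moreover have "(K - b j - s j) / a j \<le> x j" using j unfolding x_def by simp
    then have "K - b j - s j \<le> a j * x j" using aj by (simp add: divide_le_eq mult.commute)
    ultimately show "a i * x i + b i + s i \<le> a j * x j + b j + s j" by linarith
  qed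
  then show ?thesis by blast
qed

lemma weq_wardrop: "\<forall>j<n. 0 \<le> s j \<Longrightarrow> wardrop n a b s (weq n a b s)"
  unfolding weq_def using wardrop_exists wardrop_unique by (metis theI)

lemma weq_eq: "wardrop n a b s y \<Longrightarrow> weq n a b s = y"
  unfolding weq_def using wardrop_unique by (metis the_equality)

lemma levels: "wardrop n a b s y \<Longrightarrow> i<n \<Longrightarrow> j<n \<Longrightarrow> 0<y i \<Longrightarrow> 0<y j \<Longrightarrow>
   a i*y i+b i+s i = a j*y j + b j + s j"
  unfolding wardrop_def by (meson order_antisym)

definition x0 where "x0 = weq n a b (\<lambda>_. 0)"
definition K0 where "K0 = a 0 * x0 0 + b 0"

lemma x0w: "wardrop n a b (\<lambda>_. 0) x0" unfolding x0_def by (rule weq_wardrop) simp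

lemma K0: "j<n \<Longrightarrow> a j * x0 j + b j = K0"
  using levels[OF x0w, of j 0] x0pos n2 unfolding K0_def x0_def by simp

lemma small_toll:
  assumes s: "\<forall>j<n. 0 \<le> s j" and y: "wardrop n a b s y" and i: "i<n" and si: "s i < K0 - b i"
  shows "0 < y i"
proof (rule ccontr)
  assume "\<not> 0 < y i"
  then have yi: "y i = 0" using y i unfolding wardrop_def by (simp add: not_less order_antisym)
  have lt: "y j < x0 j" if j: "j \<in> {..<n}" for j
  proof (cases "0 < y j")
    case True
    then have "a j * y j + b j + s j \<le> a i * y i + b i + s i" using y i j unfolding wardrop_def by auto
    then have "a j * y j < a j * x0 j" using K0[of j] s j si yi by auto
    then show ?thesis using apos j by (simp add: mult_less_cancel_left_pos)
  next
    case False
    then have "y j = 0" using y j unfolding wardrop_def by (simp add: not_less order_antisym)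
    then show ?thesis using x0pos j unfolding x0_def by simp
  qed
  have "(\<Sum>j<n. y j) < (\<Sum>j<n. x0 j)"
    by (rule sum_strict_mono) (use n2 lt in \<open>auto simp: lessThan_empty_iff\<close>)
  moreover have "(\<Sum>j<n. y j) = 1" "(\<Sum>j<n. x0 j) = 1" using y x0w unfolding wardrop_def by auto
  ultimately show False by simp
qed


definition D where "D s i = (\<Sum>j\<in>{..<n}-{i}. (b j + s j)/a j)"

lemma sumA: "i<n \<Longrightarrow> K * S i - D s i = (\<Sum>j\<in>{..<n}-{i}. (K - b j - s j)/a j)"
  unfolding S_def D_def
  by (simp add: sum_distrib_left sum_subtractf[symmetric] diff_divide_distrib add_divide_distrib diff_diff_eq)

lemma sumy: "wardrop n a b s y \<Longrightarrow> i<n \<Longrightarrow> (\<Sum>j\<in>{..<n}-{i}. y j) = 1 - y i"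
  unfolding wardrop_def using sum.remove[of "{..<n}" i y] by simp

lemma alg: "i<n \<Longrightarrow> s i + al i * y i - ((1 + D s i)/S i - b i)
    = ((a i*y i+b i+s i) * S i - D s i - (1 - y i))/S i"
  using S_pos[of i] unfolding al_def by (simp add: field_simps)

lemma bound:
  assumes y: "wardrop n a b s y" and i: "i<n" and yi: "0 < y i"
  shows "s i + al i * y i \<le> (1 + D s i)/S i - b i"
proof -
  define K where "K = a i*y i+b i+s i"
  have "(K - b j - s j)/a j \<le> y j" if j: "j \<in> {..<n}-{i}" for j
  proof (cases "0 < y j")
    case True
    then have "K = a j * y j + b j + s j" using levels[OF y i, of j] j yi unfolding K_def by auto
    moreover have "0 < a j" using apos j by auto
    ultimately show ?thesis by simp
  next
    case False
    then have "y j = 0" using y j unfolding wardrop_def by (simp add: not_less order_antisym)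
    moreover have "K \<le> a j * y j + b j + s j" using y i j yi unfolding wardrop_def K_def by auto
    moreover have "0 < a j" using apos j by auto
    ultimately show ?thesis by (simp add: divide_nonpos_pos)
  qed
  then have "(\<Sum>j\<in>{..<n}-{i}. (K - b j - s j)/a j) \<le> (\<Sum>j\<in>{..<n}-{i}. y j)" by (rule sum_mono)
  then have "K * S i - D s i - (1 - y i) \<le> 0" using sumA[OF i] sumy[OF y i] by simp
  then have "s i + al i * y i - ((1 + D s i)/S i - b i) \<le> 0"
    unfolding alg[OF i] K_def using S_pos[OF i] by (simp add: divide_nonpos_pos)
  then show ?thesis by simp
qed

lemma bound_eq:
  assumes y: "wardrop n a b s y" and i: "i<n" and ypos: "\<forall>j<n. 0 < y j"
  shows "s i + al i * y i = (1 + D s i)/S i - b i"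
proof -
  define K where "K = a i*y i+b i+s i"
  have "(K - b j - s j)/a j = y j" if j: "j \<in> {..<n}-{i}" for j
  proof -
    have "K = a j * y j + b j + s j" using levels[OF y i, of j] j ypos i unfolding K_def by auto
    moreover have "0 < a j" using apos j by auto
    ultimately show ?thesis by simp
  qed
  then have "(\<Sum>j\<in>{..<n}-{i}. (K - b j - s j)/a j) = (\<Sum>j\<in>{..<n}-{i}. y j)" by (rule sum.cong[OF refl])
  then have "K * S i - D s i - (1 - y i) = 0" using sumA[OF i] sumy[OF y i] by simp
  then have "s i + al i * y i - ((1 + D s i)/S i - b i) = 0"
    unfolding alg[OF i] K_def by simp
  then show ?thesis by simp
qed

lemma perturb:
  assumes w: "wardrop n a b t x" and pos: "\<forall>j<n. 0 < x j" and i: "i<n"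
    and yi: "0 < x i - d / al i" and yj: "\<forall>j\<in>{..<n}-{i}. 0 < x j + d / (al i * S i * a j)"
  shows "weq n a b (t(i := t i + d)) =
     (\<lambda>j. if j = i then x i - d / al i else if j < n then x j + d / (al i * S i * a j) else 0)"
    (is "_ = ?y")
proof (rule weq_eq)
  have Sp: "0 < S i" and alp: "0 < al i" using S_pos al_pos i by auto
  define L where "L = a i * x i + b i + t i + d / (al i * S i)"
  have lev: "a j * ?y j + b j + (t(i := t i + d)) j = L" if j: "j < n" for j
  proof (cases "j = i")
    case True
    have "al i - a i = 1 / S i" unfolding al_def by simp
    have "d - a i * (d / al i) = d * (al i - a i) / al i" using alp by (simp add: field_simps)
    also have "\<dots> = d / (al i * S i)" using \<open>al i - a i = 1 / S i\<close> by simp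
    finally have "a i * (x i - d / al i) + b i + (t i + d) = L" unfolding L_def
      by (simp add: right_diff_distrib)
    then show ?thesis using True by simp
  next
    case False
    have "a j * x j + b j + t j = a i * x i + b i + t i" using levels[OF w j i] pos j i by simp
    moreover have "a j \<noteq> 0" using apos j by (metis less_irrefl)
    then have "a j * (d / (al i * S i * a j)) = d / (al i * S i)" by simp
    ultimately show ?thesis using False j unfolding L_def by (simp add: distrib_left)
  qed
  have sumA': "(\<Sum>j\<in>{..<n}-{i}. d / (al i * S i * a j)) = d / al i"
  proof -
    have "(\<Sum>j\<in>{..<n}-{i}. d / (al i * S i * a j)) = d / (al i * S i) * S i"
      unfolding S_def by (simp add: sum_distrib_left)
    then show ?thesis using Sp by simp
  qed
  show "wardrop n a b (t(i := t i + d)) ?y" unfolding wardrop_def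
  proof (intro conjI allI impI)
    show "0 \<le> ?y j" if "j < n" for j using yi yj that by (auto simp: less_imp_le)
    show "?y j = 0" if "n \<le> j" for j using that i by auto
    show "a j * ?y j + b j + (t(i := t i + d)) j \<le> a k * ?y k + b k + (t(i := t i + d)) k"
      if "j<n" "k<n" "0 < ?y j" for j k using lev that by simp
    have "(\<Sum>j<n. ?y j) = ?y i + (\<Sum>j\<in>{..<n}-{i}. ?y j)" using sum.remove[of "{..<n}" i ?y] i by simp
    also have "(\<Sum>j\<in>{..<n}-{i}. ?y j) = (\<Sum>j\<in>{..<n}-{i}. x j + d / (al i * S i * a j))"
      by (rule sum.cong) auto
    also have "\<dots> = (1 - x i) + d / al i" using sumy[OF w i] sumA' by (simp add: sum.distrib)
    finally show "(\<Sum>j<n. ?y j) = 1" by simp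
  qed
qed


lemma capped_cand:
  assumes c: "0 \<le> c" and tc: "t \<in> capped_eq n a b c"
  shows "candidate n a b c t (weq n a b t)"
proof -
  have tb: "\<forall>i<n. 0 \<le> t i \<and> t i \<le> c" and tz: "\<forall>i\<ge>n. t i = 0"
    and opt: "\<forall>i<n. \<forall>t'. 0 \<le> t' \<and> t' \<le> c \<longrightarrow> profit n a b (t(i := t')) i \<le> profit n a b t i"
    using tc unfolding capped_eq_def by auto
  define x where "x = weq n a b t"
  have w: "wardrop n a b t x" unfolding x_def by (rule weq_wardrop) (use tb in auto)
  have xpos: "\<forall>i<n. 0 < x i"
  proof (intro allI impI, rule ccontr)
    fix i assume i: "i < n" and nx: "\<not> 0 < x i"
    then have xi: "x i = 0" using w unfolding wardrop_def by (simp add: not_less order_antisym)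
    show False
    proof (cases "c = 0")
      case True
      then have "t = (\<lambda>_. 0)"
      proof (intro ext)
        fix j show "t j = 0" using tb tz True by (cases "j < n") auto
      qed
      then have "x = x0" unfolding x_def x0_def by simp
      then show False using x0pos xi i unfolding x0_def by (metis less_irrefl)
    next
      case False
      then have cp: "0 < c" using c by simp
      have "0 < a i * x0 i" using apos x0pos i unfolding x0_def by simp
      then have Kb: "b i < K0" using K0[OF i] by linarith
      define t' where "t' = min c ((K0 - b i)/2)"
      have t'p: "0 < t'" "t' \<le> c" "t' < K0 - b i" using cp Kb unfolding t'_def by (auto simp: min_def)
      define s where "s = t(i := t')"
      have sn: "\<forall>j<n. 0 \<le> s j" using tb t'p unfolding s_def by auto
      have ws: "wardrop n a b s (weq n a b s)" by (rule weq_wardrop[OF sn])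
      have "0 < weq n a b s i" by (rule small_toll[OF sn ws i]) (use t'p in \<open>simp add: s_def\<close>)
      then have "0 < profit n a b s i" unfolding profit_def using t'p s_def by simp
      moreover have "profit n a b s i \<le> profit n a b t i" using opt i t'p unfolding s_def by auto
      moreover have "profit n a b t i = 0" unfolding profit_def using xi x_def by simp
      ultimately show False by simp
    qed
  qed
  have teq: "t i = min (al i * x i) c" if i: "i < n" for i
  proof -
    have alp: "0 < al i" using al_pos[OF i] .
    have Sp: "0 < S i" using S_pos[OF i] .
    have xi: "0 < x i" using xpos i by simp
    have ti: "0 \<le> t i" "t i \<le> c" using tb i by auto
    have axp: "0 < al i * x i" using alp xi by simp
    have pdiff: "(t i + d) * (x i - d / al i) - t i * x i = d * (al i * x i - t i - d) / al i" for d
      using alp by (simp add: field_simps)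
    have prof: "profit n a b (t(i := t i + d)) i = (t i + d) * (x i - d / al i)"
      if "0 < x i - d / al i" "\<forall>j\<in>{..<n}-{i}. 0 < x j + d / (al i * S i * a j)" for d
      unfolding profit_def using perturb[OF w xpos i that] by simp
    have pt: "profit n a b t i = t i * x i" unfolding profit_def x_def by simp
    show ?thesis
    proof (rule ccontr)
      assume ne: "t i \<noteq> min (al i * x i) c"
      show False
      proof (cases "t i < min (al i * x i) c")
        case True
        define d where "d = min (c - t i) (al i * x i - t i) / 2"
        have dp: "0 < d" using True unfolding d_def by simp
        have d1: "d \<le> (c - t i)/2" "d \<le> (al i * x i - t i)/2" unfolding d_def by auto
        have "d < al i * x i" using d1 ti axp by argo
        then have "d / al i < x i" using alp by (simp add: divide_less_eq mult.commute)
        then have c1: "0 < x i - d / al i" by simp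
        have c2: "\<forall>j\<in>{..<n}-{i}. 0 < x j + d / (al i * S i * a j)"
        proof
          fix j assume j: "j \<in> {..<n}-{i}"
          have "0 < al i * S i * a j" using alp Sp apos j by simp
          then show "0 < x j + d / (al i * S i * a j)" using xpos j dp by (simp add: add_pos_pos)
        qed
        have "profit n a b (t(i := t i + d)) i \<le> profit n a b t i"
          using opt i d1 dp ti by auto
        then have "(t i + d) * (x i - d / al i) - t i * x i \<le> 0" using prof[OF c1 c2] pt by linarith
        then have "d * (al i * x i - t i - d) / al i \<le> 0" using pdiff[of d] by linarith
        moreover have "0 < d * (al i * x i - t i - d) / al i" using dp d1 True alp
          by (intro divide_pos_pos mult_pos_pos) auto
        ultimately show False by simp
      next
        case False
        then have gt: "al i * x i < t i" using ne ti by (auto simp: min_def split: if_splits)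
        define A where "A = {..<n}-{i}"
        have Afin: "finite A" unfolding A_def by simp
        obtain j0 where j0: "j0 < n" "j0 \<noteq> i" using n2
          by (metis One_nat_def Suc_1 Suc_le_lessD le_less_trans less_Suc_eq not_less_eq_eq zero_less_Suc)
        have Ane: "A \<noteq> {}" using j0 unfolding A_def by auto
        define m where "m = Min ((\<lambda>j. al i * S i * a j * x j) ` A)"
        have mp: "0 < m" unfolding m_def using Afin Ane
        proof (subst Min_gr_iff, simp_all, intro ballI)
          fix j assume "j \<in> A"
          then have "j < n" unfolding A_def by simp
          then show "0 < al i * S i * a j * x j" using alp Sp apos xpos by simp
        qed
        have mle: "m \<le> al i * S i * a j * x j" if "j \<in> A" for j
          unfolding m_def using Afin that by (intro Min_le) auto
        define e where "e = min (t i - al i * x i) m / 2"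
        have ep: "0 < e" using gt mp unfolding e_def by simp
        have e1: "e \<le> (t i - al i * x i)/2" "e \<le> m/2" unfolding e_def by auto
        have c1: "0 < x i - (-e) / al i" using xi ep alp by (simp add: add_pos_pos)
        have c2: "\<forall>j\<in>{..<n}-{i}. 0 < x j + (-e) / (al i * S i * a j)"
        proof
          fix j assume j: "j \<in> {..<n}-{i}"
          have pj: "0 < al i * S i * a j" using alp Sp apos j by simp
          have "e < al i * S i * a j * x j" using mle[of j] j e1 mp unfolding A_def by linarith
          then have "e / (al i * S i * a j) < x j" using pj by (simp add: divide_less_eq mult.commute mult.left_commute)
          then show "0 < x j + (-e) / (al i * S i * a j)" by simp
        qed
        have "profit n a b (t(i := t i + (-e))) i \<le> profit n a b t i"
          using opt i e1 ep ti gt axp by auto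
        then have "(t i + (-e)) * (x i - (-e) / al i) - t i * x i \<le> 0" using prof[OF c1 c2] pt by linarith
        then have "(-e) * (al i * x i - t i - (-e)) / al i \<le> 0" using pdiff[of "-e"] by linarith
        moreover have "0 < (-e) * (al i * x i - t i - (-e)) / al i"
        proof -
          have "(-e) * (al i * x i - t i - (-e)) = e * (t i - al i * x i - e)" by (simp add: algebra_simps)
          moreover have "0 < e * (t i - al i * x i - e)" using ep e1 gt by (intro mult_pos_pos) auto
          ultimately show ?thesis using alp by simp
        qed
        ultimately show False by simp
      qed
    qed
  qed
  have lev: "\<forall>i<n. a i * x i + b i + t i = a 0 * x 0 + b 0 + t 0"
  proof (intro allI impI)
    fix i assume i: "i < n"
    have "0 < n" using n2 by simp
    then show "a i * x i + b i + t i = a 0 * x 0 + b 0 + t 0"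
      using levels[OF w i, of 0] xpos i by blast
  qed
  show ?thesis unfolding candidate_def x_def[symmetric]
  proof (intro conjI)
    show "\<exists>K. \<forall>i<n. a i * x i + b i + t i = K" using lev by blast
    show "(\<Sum>i<n. x i) = 1" using w unfolding wardrop_def by simp
    show "\<forall>i<n. t i = min ((a i + 1 / (\<Sum>j\<in>{..<n} - {i}. 1 / a j)) * x i) c"
      using teq unfolding al_def S_def by simp
    show "\<forall>i<n. 0 < x i" by (rule xpos)
  qed
qed


lemma cand_t: "candidate n a b c t x \<Longrightarrow> i<n \<Longrightarrow> t i = min (al i * x i) c"
  unfolding candidate_def al_def S_def by simp

lemma cand_aux:
  assumes ct: "candidate n a b c t x" and ct': "candidate n a b c t' x'"
    and K: "\<forall>i<n. a i * x i + b i + t i = K" and K': "\<forall>i<n. a i * x' i + b i + t' i = K'"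
    and KK: "K \<le> K'"
  shows "\<forall>i<n. x i = x' i"
proof -
  have le: "x i \<le> x' i" if i: "i \<in> {..<n}" for i
  proof (rule ccontr)
    assume "\<not> x i \<le> x' i"
    then have lt: "x' i < x i" by simp
    have ai: "0 < a i" and alp: "0 < al i" using apos al_pos i by auto
    have "a i * x' i < a i * x i" using lt ai by simp
    moreover have "al i * x' i \<le> al i * x i" using lt alp by simp
    then have "min (al i * x' i) c \<le> min (al i * x i) c" by (simp add: min_def)
    ultimately have "a i * x' i + b i + t' i < a i * x i + b i + t i"
      using cand_t[OF ct, of i] cand_t[OF ct', of i] i by simp
    moreover have "a i * x i + b i + t i = K" "a i * x' i + b i + t' i = K'" using K K' i by auto
    ultimately show False using KK by linarith
  qed
  have s1: "(\<Sum>i<n. x i) = 1" "(\<Sum>i<n. x' i) = 1" using ct ct' unfolding candidate_def by auto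
  have "(\<Sum>i<n. x' i - x i) = 0" using s1 by (simp add: sum_subtractf)
  then have "\<forall>i\<in>{..<n}. x' i - x i = 0"
    using sum_nonneg_eq_0_iff[of "{..<n}" "\<lambda>i. x' i - x i"] le by auto
  then show ?thesis by auto
qed

lemma cand_unique:
  assumes ct: "candidate n a b c t x" and ct': "candidate n a b c t' x'"
  shows "\<forall>i<n. t i = t' i \<and> x i = x' i"
proof -
  obtain K where K: "\<forall>i<n. a i * x i + b i + t i = K" using ct unfolding candidate_def by blast
  obtain K' where K': "\<forall>i<n. a i * x' i + b i + t' i = K'" using ct' unfolding candidate_def by blast
  have "\<forall>i<n. x i = x' i"
  proof (cases "K \<le> K'")
    case True then show ?thesis using cand_aux[OF ct ct' K K'] by simp
  next
    case False then show ?thesis using cand_aux[OF ct' ct K' K] by simp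
  qed
  then show ?thesis using cand_t[OF ct] cand_t[OF ct'] by simp
qed

lemma maxlemma:
  fixes A al B c K :: real
  assumes A: "0 < A" and al: "0 < al"
  shows "K - B - A * max ((K - B)/(A + al)) ((K - B - c)/A) = min (al * max ((K - B)/(A + al)) ((K - B - c)/A)) c"
proof -
  define u where "u = (K - B)/(A + al)"
  define v where "v = (K - B - c)/A"
  have hu: "(A + al) * u = K - B" unfolding u_def using A al by simp
  have hv: "A * v = K - B - c" unfolding v_def using A by simp
  have "K - B - A * max u v = min (al * max u v) c"
  proof (cases "v \<le> u")
    case True
    then have "A * v \<le> A * u" using A by simp
    then have "al * u \<le> c" using hu hv by (simp add: algebra_simps)
    moreover have "K - B - A * u = al * u" using hu by (simp add: algebra_simps)
    ultimately show ?thesis using True by (simp add: max_def)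
  next
    case False
    then have "(A + al) * u < (A + al) * v" using A al by simp
    then have "c < al * v" using hu hv by (simp add: algebra_simps)
    moreover have "K - B - A * v = c" using hv by simp
    ultimately show ?thesis using False by (simp add: max_def)
  qed
  then show ?thesis unfolding u_def v_def .
qed

lemma cand_exists:
  assumes c: "0 \<le> c" shows "\<exists>t x. candidate n a b c t x"
proof -
  define H where "H K = (\<Sum>j<n. max ((K - b j)/(a j + al j)) ((K - b j - c)/a j))" for K
  have n0: "0 < n" using n2 by simp
  have Kb: "b j < K0" if "j < n" for j
  proof -
    have "0 < a j * x0 j" using apos x0pos that unfolding x0_def by simp
    then show ?thesis using K0[OF that] by linarith
  qed
  have x0e: "x0 j = (K0 - b j) / a j" if "j < n" for j
    using K0[OF that] apos that by (auto simp: field_simps)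
  have HK0: "H K0 \<le> 1"
  proof -
    have "H K0 \<le> (\<Sum>j<n. x0 j)" unfolding H_def
    proof (rule sum_mono)
      fix j assume j: "j \<in> {..<n}"
      have aj: "0 < a j" and alj: "0 < al j" using apos al_pos j by auto
      have p: "0 \<le> K0 - b j" using Kb j by (simp add: less_imp_le)
      have "(K0 - b j)/(a j + al j) \<le> (K0 - b j)/a j"
        using p aj alj by (intro divide_left_mono) auto
      moreover have "(K0 - b j - c)/a j \<le> (K0 - b j)/a j"
        using c aj by (intro divide_right_mono) auto
      ultimately show "max ((K0 - b j)/(a j + al j)) ((K0 - b j - c)/a j) \<le> x0 j"
        using x0e j by simp
    qed
    then show ?thesis using x0w unfolding wardrop_def by simp
  qed
  define Kh where "Kh = max K0 (a 0 + b 0 + c)"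
  have termpos: "0 < max ((K - b j)/(a j + al j)) ((K - b j - c)/a j)" if "K0 \<le> K" "j < n" for K j
  proof -
    have "0 < (K - b j)/(a j + al j)" using Kb[OF that(2)] that apos al_pos
      by (intro divide_pos_pos) (auto intro: add_pos_pos)
    then show ?thesis by simp
  qed
  have HKh: "1 \<le> H Kh"
  proof -
    have a0: "0 < a 0" using apos n0 by simp
    have "1 \<le> (Kh - b 0 - c)/a 0" using a0 unfolding Kh_def by (simp add: le_divide_eq)
    also have "\<dots> \<le> max ((Kh - b 0)/(a 0 + al 0)) ((Kh - b 0 - c)/a 0)" by simp
    also have "\<dots> \<le> H Kh" unfolding H_def
      by (rule member_le_sum[where f="\<lambda>j. max ((Kh - b j)/(a j + al j)) ((Kh - b j - c)/a j)"])
         (use n0 termpos[of Kh] in \<open>auto simp: Kh_def less_imp_le\<close>)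
    finally show ?thesis .
  qed
  have cont: "continuous_on {K0..Kh} H" unfolding H_def
    by (intro continuous_intros) (use apos al_pos in \<open>auto simp: add_pos_pos less_imp_neq[symmetric]\<close>)
  obtain K where K: "K0 \<le> K" "K \<le> Kh" "H K = 1"
    using IVT'[of H K0 1 Kh] HK0 HKh cont unfolding Kh_def by auto
  define x where "x j = max ((K - b j)/(a j + al j)) ((K - b j - c)/a j)" for j
  define t where "t j = K - b j - a j * x j" for j
  have "candidate n a b c t x" unfolding candidate_def
  proof (intro conjI)
    show "\<exists>K. \<forall>i<n. a i * x i + b i + t i = K" unfolding t_def by auto
    show "(\<Sum>i<n. x i) = 1" using K(3) unfolding H_def x_def by simp
    show "\<forall>i<n. 0 < x i" using termpos K(1) unfolding x_def by simp
    show "\<forall>i<n. t i = min ((a i + 1 / (\<Sum>j\<in>{..<n} - {i}. 1 / a j)) * x i) c"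
    proof (intro allI impI)
      fix i assume i: "i < n"
      have "t i = min (al i * x i) c" unfolding t_def x_def
        by (rule maxlemma) (use apos al_pos i in auto)
      then show "t i = min ((a i + 1 / (\<Sum>j\<in>{..<n} - {i}. 1 / a j)) * x i) c"
        unfolding al_def S_def .
    qed
  qed
  then show ?thesis by blast
qed


lemma cand_in_capped:
  assumes c: "0 \<le> c" and ct: "candidate n a b c t x"
  shows "(\<lambda>j. if j < n then t j else 0) \<in> capped_eq n a b c"
proof -
  define tt where "tt j = (if j < n then t j else 0)" for j
  define xx where "xx j = (if j < n then x j else 0)" for j
  obtain K where K: "\<forall>i<n. a i * x i + b i + t i = K" using ct unfolding candidate_def by blast
  have xpos: "\<forall>i<n. 0 < xx i" using ct unfolding candidate_def xx_def by simp
  have teq: "tt i = min (al i * xx i) c" if "i < n" for i using cand_t[OF ct that] that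
    unfolding tt_def xx_def by simp
  have w: "wardrop n a b tt xx" unfolding wardrop_def
  proof (intro conjI allI impI)
    show "0 \<le> xx i" if "i < n" for i using xpos that by (simp add: less_imp_le)
    show "(\<Sum>i<n. xx i) = 1" using ct unfolding candidate_def xx_def by simp
    show "xx i = 0" if "n \<le> i" for i using that unfolding xx_def by simp
    show "a i * xx i + b i + tt i \<le> a j * xx j + b j + tt j" if "i<n" "j<n" "0 < xx i" for i j
      using K that unfolding xx_def tt_def by simp
  qed
  have weqx: "weq n a b tt = xx" by (rule weq_eq[OF w])
  have tb: "0 \<le> tt i \<and> tt i \<le> c" if "i < n" for i
  proof -
    have "0 < al i * xx i" using al_pos xpos that by simp
    then show ?thesis using teq[OF that] c by (simp add: min_def)
  qed
  have "tt \<in> capped_eq n a b c" unfolding capped_eq_def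
  proof (intro CollectI conjI allI impI)
    show "0 \<le> tt i" "tt i \<le> c" if "i < n" for i using tb that by auto
    show "tt i = 0" if "n \<le> i" for i using that unfolding tt_def by simp
    fix i t' assume i: "i < n" and t': "0 \<le> t' \<and> t' \<le> c"
    define s where "s = tt(i := t')"
    have sn: "\<forall>j<n. 0 \<le> s j" using tb t' unfolding s_def by auto
    define y where "y = weq n a b s"
    have ws: "wardrop n a b s y" unfolding y_def by (rule weq_wardrop[OF sn])
    have alp: "0 < al i" using al_pos i .
    have xi: "0 < xx i" using xpos i by simp
    define C where "C = tt i + al i * xx i"
    have DD: "D s i = D tt i" unfolding D_def s_def by (rule sum.cong) auto
    have Ceq: "C = (1 + D tt i)/S i - b i" unfolding C_def by (rule bound_eq[OF w i xpos])
    have pt: "profit n a b tt i = tt i * xx i" unfolding profit_def weqx ..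
    have ps: "profit n a b s i = t' * y i" unfolding profit_def y_def s_def by simp
    have pnn: "0 \<le> tt i * xx i" using tb[OF i] xi by simp
    show "profit n a b (tt(i := t')) i \<le> profit n a b tt i"
      unfolding s_def[symmetric] pt ps
    proof (cases "0 < y i")
      case False
      then have "y i = 0" using ws i unfolding wardrop_def by (simp add: not_less order_antisym)
      then show "t' * y i \<le> tt i * xx i" using pnn by simp
    next
      case True
      have "s i + al i * y i \<le> (1 + D s i)/S i - b i" by (rule bound[OF ws i True])
      then have "t' + al i * y i \<le> C" using Ceq DD unfolding s_def by simp
      then have "y i \<le> (C - t') / al i" using alp by (simp add: le_divide_eq mult.commute)
      then have "t' * y i \<le> t' * ((C - t') / al i)" using t' by (intro mult_left_mono) auto
      also have "\<dots> = t' * (C - t') / al i" by simp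
      also have "\<dots> \<le> tt i * (C - tt i) / al i"
      proof (rule divide_right_mono)
        show "0 \<le> al i" using alp by simp
        have fac: "tt i * (C - tt i) - t' * (C - t') = (tt i - t') * (C - tt i - t')" by (simp add: algebra_simps)
        have "0 \<le> (tt i - t') * (C - tt i - t')"
        proof (cases "al i * xx i \<le> c")
          case True
          then have "tt i = al i * xx i" using teq[OF i] by simp
          then have "C - tt i - t' = tt i - t'" unfolding C_def by simp
          then show ?thesis by simp
        next
          case False
          then have "tt i = c" using teq[OF i] by simp
          then show ?thesis using t' False unfolding C_def by (intro mult_nonneg_nonneg) auto
        qed
        then show "t' * (C - t') \<le> tt i * (C - tt i)" using fac by linarith
      qed
      also have "\<dots> = tt i * xx i" unfolding C_def using alp by simp
      finally show "t' * y i \<le> tt i * xx i" .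
    qed
  qed
  then show ?thesis unfolding tt_def by simp
qed

end

theorem mainTheorem6:
  fixes n :: nat and a b :: "nat \<Rightarrow> real"
  assumes "n \<ge> 2"
    and "\<forall>i<n. 0 < a i" and "\<forall>i<n. 0 \<le> b i"
    and "\<forall>i<n. 0 < weq n a b (\<lambda>_. 0) i"
  shows "\<forall>c \<ge> 0.
           (\<forall>t x t' x'. candidate n a b c t x \<and> candidate n a b c t' x' \<longrightarrow>
                (\<forall>i<n. t i = t' i \<and> x i = x' i))
         \<and> (\<exists>!t. t \<in> capped_eq n a b c)"
proof -
  interpret net n a b using assms by unfold_locales auto
  show ?thesis
  proof (intro allI impI)
    fix c :: real assume c: "0 \<le> c"
    have P1: "\<forall>t x t' x'. candidate n a b c t x \<and> candidate n a b c t' x' \<longrightarrow>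
                (\<forall>i<n. t i = t' i \<and> x i = x' i)" using cand_unique by blast
    obtain t x where ct: "candidate n a b c t x" using cand_exists[OF c] by blast
    have "\<exists>!t. t \<in> capped_eq n a b c"
    proof (rule ex1I)
      show "(\<lambda>j. if j < n then t j else 0) \<in> capped_eq n a b c" by (rule cand_in_capped[OF c ct])
    next
      fix t1 assume t1: "t1 \<in> capped_eq n a b c"
      have "candidate n a b c t1 (weq n a b t1)" by (rule capped_cand[OF c t1])
      then have eq: "\<forall>i<n. t1 i = t i" using cand_unique ct by blast
      have z: "\<forall>i\<ge>n. t1 i = 0" using t1 unfolding capped_eq_def by auto
      show "t1 = (\<lambda>j. if j < n then t j else 0)"
      proof
        fix j show "t1 j = (if j < n then t j else 0)" using eq z by (cases "j < n") auto
      qed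
    qed
    then show "(\<forall>t x t' x'. candidate n a b c t x \<and> candidate n a b c t' x' \<longrightarrow>
                (\<forall>i<n. t i = t' i \<and> x i = x' i)) \<and> (\<exists>!t. t \<in> capped_eq n a b c)"
      using P1 by blast
  qed
qed

end
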